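(* Let $r,s,t>1$ and $M>0$ be real numbers, set $c = 4rst - 2r^2 - 2s^2 - 2t^2 + 1$ and assume $c>1$. Put $\tilde M = M\,\frac{s\sqrt{c^2-1} + (c-1)\sqrt{s^2-1}}{c-1}$. Define the following elements of $\mathrm{SL}(2,\mathbb{R})$: $$\rho = r\mathbf{1} + \frac{r(c+1)}{\sqrt{c^2-1}}\mathbf{I} - \frac{\tilde M(2rs - t + (c+\sqrt{c^2-1})t)}{2(c-1+2s^2)}(\mathbf{J}+\mathbf{K}) + \frac{2rs-t+(c-\sqrt{c^2-1})t}{2\tilde M(c-1)}(\mathbf{J}-\mathbf{K}),$$ $$\sigma = s\mathbf{1} - \frac{s(c+1)}{\sqrt{c^2-1}}\mathbf{I} + \frac{\tilde M}{2}(\mathbf{J}+\mathbf{K}) - \frac{c-1+2s^2}{2\tilde M(c-1)}(\mathbf{J}-\mathbf{K}),$$ and let $\rho'$, $\sigma'$ be obtained from $\rho$, $\sigma$ respectively by changing the signs of the coefficients of $(\mathbf{J}+\mathbf{K})$ and $(\mathbf{J}-\mathbf{K})$ (leaving the coefficients of $\mathbf{1}$ and $\mathbf{I}$ unchanged). Let $\mathcal{S}$ be the genus 2 hyperbolic surface obtained by doubling the once-punctured torus determined by $\rho,\sigma$, whose fundamental group is represented by the group generated by (the images in $\mathrm{PSL}(2,\mathbb{R})$ of) $\rho,\sigma,\rho',\sigma'$. Then the trace field of $\mathcal{S}$, i.e. $\mathbb{Q}(\{\mathrm{tr}\,\gamma\})$ where $\gamma$ ranges over the preimage in $\mathrm{SL}(2,\mathbb{R})$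 of this group, is equal to $\mathbb{Q}(r,s,t)$.
   Context: $\mathbf{1} = \begin{pmatrix}1&0\\0&1\end{pmatrix}$, $\mathbf{I} = \begin{pmatrix}1&0\\0&-1\end{pmatrix}$, $\mathbf{J} = \begin{pmatrix}0&1\\1&0\end{pmatrix}$, $\mathbf{K} = \begin{pmatrix}0&1\\-1&0\end{pmatrix}$. With these parameters $\rho,\sigma$ generate a Fuchsian group uniformizing a hyperbolic once-punctured torus $\mathcal{T}$ with $\mathrm{tr}\,\rho=2r$, $\mathrm{tr}\,\sigma=2s$, $\mathrm{tr}\,\rho\sigma=2t$, $\mathrm{tr}\,[\rho,\sigma] = -2c$; $\rho',\sigma'$ correspond to the mirror image of $\mathcal{T}$ (the Möbius map $\frac{az+b}{cz+d}$ is replaced by $\frac{az-b}{-cz+d}$), and $\mathcal{S}$ is obtained by gluing $\mathcal{T}$ and its mirror image along their common boundary. *)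

theory Defs
  imports "HOL-Analysis.Analysis"
begin

definition mat2 :: "real \<Rightarrow> real \<Rightarrow> real \<Rightarrow> real \<Rightarrow> real^2^2" where
  "mat2 a b c d = vector [vector [a, b], vector [c, d]]"

definition mI :: "real^2^2" where "mI = mat2 1 0 0 (-1)"
definition mJ :: "real^2^2" where "mJ = mat2 0 1 1 0"
definition mK :: "real^2^2" where "mK = mat2 0 1 (-1) 0"

inductive_set gen_group :: "(real^2^2) set \<Rightarrow> (real^2^2) set" for S where
  one: "mat 1 \<in> gen_group S"
| mul: "g \<in> S \<Longrightarrow> h \<in> gen_group S \<Longrightarrow> g ** h \<in> gen_group S"
| mul_inv: "g \<in> S \<Longrightarrow> h \<in> gen_group S \<Longrightarrow> matrix_inv g ** h \<in> gen_group S"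

definition is_subfield :: "real set \<Rightarrow> bool" where
  "is_subfield F \<longleftrightarrow> 0 \<in> F \<and> 1 \<in> F \<and>
     (\<forall>x\<in>F. \<forall>y\<in>F. x + y \<in> F \<and> x * y \<in> F) \<and>
     (\<forall>x\<in>F. - x \<in> F \<and> (x \<noteq> 0 \<longrightarrow> inverse x \<in> F))"

definition field_gen :: "real set \<Rightarrow> real set" where
  "field_gen A = \<Inter>{F. is_subfield F \<and> A \<subseteq> F}"

end

theory Submission
  imports Defs
begin


lemma mat2_nth [simp]:
  "mat2 a b c d $ 1 $ 1 = a" "mat2 a b c d $ 1 $ 2 = b"
  "mat2 a b c d $ 2 $ 1 = c" "mat2 a b c d $ 2 $ 2 = d"
  by (simp_all add: mat2_def)

lemma mat2_eta: "X = mat2 (X$1$1) (X$1$2) (X$2$1) (X$2$2)"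
  by (simp add: vec_eq_iff forall_2)

lemma mat2_eq_iff: "mat2 a b c d = mat2 a' b' c' d' \<longleftrightarrow> a = a' \<and> b = b' \<and> c = c' \<and> d = d'"
  by (metis mat2_nth)

lemma mat2_one: "(mat 1 :: real^2^2) = mat2 1 0 0 1"
  by (simp add: vec_eq_iff forall_2 mat_def)

lemma mat2_add [simp]: "mat2 a b c d + mat2 a' b' c' d' = mat2 (a+a') (b+b') (c+c') (d+d')"
  by (simp add: vec_eq_iff forall_2)
lemma mat2_diff [simp]: "mat2 a b c d - mat2 a' b' c' d' = mat2 (a-a') (b-b') (c-c') (d-d')"
  by (simp add: vec_eq_iff forall_2)
lemma mat2_neg [simp]: "- mat2 a b c d = mat2 (-a) (-b) (-c) (-d)"
  by (simp add: vec_eq_iff forall_2)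
lemma mat2_scale [simp]: "x *\<^sub>R mat2 a b c d = mat2 (x*a) (x*b) (x*c) (x*d)"
  by (simp add: vec_eq_iff forall_2)
lemma mat2_mult [simp]: "mat2 a b c d ** mat2 a' b' c' d' =
   mat2 (a*a'+b*c') (a*b'+b*d') (c*a'+d*c') (c*b'+d*d')"
  by (simp add: vec_eq_iff forall_2 matrix_matrix_mult_def sum_2)
lemma mat2_trace [simp]: "trace (mat2 a b c d) = a + d"
  by (simp add: trace_def sum_2)
lemma mat2_det [simp]: "det (mat2 a b c d) = a*d - b*c"
  by (simp add: det_2)

lemma matrix_inv_eqI:
  fixes X B :: "real^2^2"
  assumes "X ** B = mat 1" "B ** X = mat 1"
  shows "matrix_inv X = B"
proof -
  have "\<exists>A'. X ** A' = mat 1 \<and> A' ** X = mat 1" using assms by blast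
  then have h: "X ** matrix_inv X = mat 1 \<and> matrix_inv X ** X = mat 1"
    unfolding matrix_inv_def by (rule someI_ex)
  have "matrix_inv X = matrix_inv X ** (X ** B)" using assms by (simp add: matrix_mul_rid)
  also have "\<dots> = B" using h by (simp add: matrix_mul_assoc matrix_mul_lid)
  finally show ?thesis .
qed

lemma matrix_inv_det1:
  fixes X :: "real^2^2"
  assumes "det X = 1"
  shows "matrix_inv X = trace X *\<^sub>R mat 1 - X"
proof -
  obtain a b c d where X: "X = mat2 a b c d" using mat2_eta by blast
  have "a*d - b*c = 1" using assms X by simp
  then show ?thesis unfolding X
    by (intro matrix_inv_eqI) (simp_all add: mat2_one algebra_simps)
qed

lemma CH_sq:
  fixes X :: "real^2^2"
  shows "X ** X = trace X *\<^sub>R X - det X *\<^sub>R mat 1"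
proof -
  obtain a b c d where X: "X = mat2 a b c d" using mat2_eta by blast
  show ?thesis unfolding X by (simp add: mat2_one algebra_simps)
qed

lemma CH_pol:
  fixes X Y :: "real^2^2"
  shows "Y ** X = trace X *\<^sub>R Y + trace Y *\<^sub>R X + (trace (X ** Y) - trace X * trace Y) *\<^sub>R mat 1 - X ** Y"
proof -
  obtain a b c d where X: "X = mat2 a b c d" using mat2_eta by blast
  obtain a' b' c' d' where Y: "Y = mat2 a' b' c' d'" using mat2_eta by blast
  show ?thesis unfolding X Y by (simp add: mat2_one algebra_simps)
qed



lemma sf_intersect: "(\<And>F. F \<in> \<F> \<Longrightarrow> is_subfield F) \<Longrightarrow> is_subfield (\<Inter>\<F>)"
  unfolding is_subfield_def by blast

lemma sf_field_gen: "is_subfield (field_gen A)"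
  unfolding field_gen_def by (rule sf_intersect) auto

lemma field_gen_sub: "A \<subseteq> field_gen A"
  unfolding field_gen_def by blast

lemma field_gen_least: "is_subfield F \<Longrightarrow> A \<subseteq> F \<Longrightarrow> field_gen A \<subseteq> F"
  unfolding field_gen_def by blast

context fixes F assumes SF: "is_subfield F" begin
lemma sf0: "0 \<in> F" and sf1: "1 \<in> F" using SF by (auto simp: is_subfield_def)
lemma sf_add: "x \<in> F \<Longrightarrow> y \<in> F \<Longrightarrow> x + y \<in> F" using SF by (auto simp: is_subfield_def)
lemma sf_mult: "x \<in> F \<Longrightarrow> y \<in> F \<Longrightarrow> x * y \<in> F" using SF by (auto simp: is_subfield_def)
lemma sf_neg: "x \<in> F \<Longrightarrow> - x \<in> F" using SF by (auto simp: is_subfield_def)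
lemma sf_inv: "x \<in> F \<Longrightarrow> inverse x \<in> F"
  using SF by (cases "x = 0") (auto simp: is_subfield_def)
lemma sf_diff: "x \<in> F \<Longrightarrow> y \<in> F \<Longrightarrow> x - y \<in> F"
  using sf_add[of x "-y"] sf_neg[of y] by simp
lemma sf_divide: "x \<in> F \<Longrightarrow> y \<in> F \<Longrightarrow> x / y \<in> F"
  using sf_mult[of x "inverse y"] sf_inv[of y] by (simp add: divide_inverse)
lemma sf_of_nat: "of_nat n \<in> F"
  by (induction n) (simp_all add: sf0 sf_add sf1)
lemma sf_numeral: "numeral n \<in> F"
  using sf_of_nat[of "numeral n"] by simp
lemma sf_power: "x \<in> F \<Longrightarrow> x ^ n \<in> F"
  by (induction n) (simp_all add: sf1 sf_mult)
lemmas sf_closed = sf0 sf1 sf_add sf_mult sf_neg sf_inv sf_diff sf_divide sf_numeral sf_power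
end




lemma scal:
  fixes r s t c p Mt :: real
  assumes c: "c = 4  *  r  *  s  *  t - 2  *  r^2 - 2  *  s^2 - 2  *  t^2 + 1"
    and p: "p^2 = c^2 - 1" and pp: "p > 0" and Mt: "Mt \<noteq> 0" and c1: "c > 1" and s1: "s > 1"
  defines "a \<equiv> r  *  (c+1) / p" and "b \<equiv> Mt  *  (2  *  r  *  s - t + (c + p)  *  t) / (2  *  (c - 1 + 2  *  s^2))"
    and "d \<equiv> (2  *  r  *  s - t + (c - p)  *  t) / (2  *  Mt  *  (c - 1))"
    and "e \<equiv> s  *  (c+1) / p" and "f \<equiv> Mt / 2" and "g \<equiv> (c - 1 + 2  *  s^2) / (2  *  Mt  *  (c - 1))"
  shows "(r+a) * (r-a) - (-(2 * b)) * (2 * d) = 1"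
    and "(s-e) * (s+e) - (2 * f) * (-(2 * g)) = 1"
    and "(r+a) * (s-e) + (-(2 * b)) * (-(2 * g)) + ((2 * d) * (2 * f) + (r-a) * (s+e)) = 2 * t"
    and "(2 * r * s * t - r^2 + s^2 - t^2) - (2 * s * t - r) * (r+a) - s * (s-e) + t * ((r+a) * (s-e) + (-(2 * b)) * (-(2 * g))) = - p/2"
    and "- (2 * s * t - r) * (-(2 * b)) - s * (2 * f) + t * ((r+a) * (2 * f) + (-(2 * b)) * (s+e)) = 0"
    and "- (2 * s * t - r) * (2 * d) - s * (-(2 * g)) + t * ((2 * d) * (s-e) + (r-a) * (-(2 * g))) = 0"
    and "(2 * r * s * t - r^2 + s^2 - t^2) - (2 * s * t - r) * (r-a) - s * (s+e) + t * ((2 * d) * (2 * f) + (r-a) * (s+e)) = p/2"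
proof -
  have d1: "c - 1 \<noteq> 0" "c - 1 + 2 * s^2 \<noteq> 0" "p \<noteq> 0" using c1 pp s1 by (auto, smt (verit) zero_le_power2)
  have ha: "a  *  p = r * (c+1)" using d1 by (simp add: a_def)
  have hb: "b  *  (2  *  (c - 1 + 2  *  s^2)) = Mt  *  (2  *  r  *  s - t + (c + p)  *  t)" using d1 by (simp add: b_def)
  have hd: "d  *  (2  *  Mt  *  (c - 1)) = (2  *  r  *  s - t + (c - p)  *  t)" using d1 Mt by (simp add: d_def)
  have he: "e  *  p = s * (c+1)" using d1 by (simp add: e_def)
  have hf: "2  *  f = Mt" by (simp add: f_def)
  have hg: "g  *  (2  *  Mt  *  (c - 1)) = c - 1 + 2  *  s^2" using d1 Mt by (simp add: g_def)
  have nz: "p^2  *  (c - 1 + 2 * s^2)  *  (c-1)  *  Mt \<noteq> 0" using d1 Mt by simp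
  have "((r+a) * (r-a) - (-(2 * b)) * (2 * d) - 1)  *  (p^2  *  (c - 1 + 2 * s^2)  *  (c-1)  *  Mt) = 0"
    using ha hb hd p c by algebra
  then show "(r+a) * (r-a) - (-(2 * b)) * (2 * d) = 1" using nz by simp
  have "((s-e) * (s+e) - (2 * f) * (-(2 * g)) - 1)  *  (p^2  *  (c-1)  *  Mt) = 0"
    using he hf hg p c by algebra
  then show "(s-e) * (s+e) - (2 * f) * (-(2 * g)) = 1" using d1 Mt by simp
  have "((r+a) * (s-e) + (-(2 * b)) * (-(2 * g)) + ((2 * d) * (2 * f) + (r-a) * (s+e)) - 2 * t)  *  (p^2  *  (c - 1 + 2 * s^2)  *  (c-1)  *  Mt) = 0"
    using ha hb hd he hf hg p c by algebra
  then show "(r+a) * (s-e) + (-(2 * b)) * (-(2 * g)) + ((2 * d) * (2 * f) + (r-a) * (s+e)) = 2 * t" using nz by simp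
  have "((2 * r * s * t - r^2 + s^2 - t^2) - (2 * s * t - r) * (r+a) - s * (s-e) + t * ((r+a) * (s-e) + (-(2 * b)) * (-(2 * g))) + p/2)  *  (p^2  *  (c - 1 + 2 * s^2)  *  (c-1)  *  Mt) = 0"
    using ha hb he hg p c by algebra
  then show "(2 * r * s * t - r^2 + s^2 - t^2) - (2 * s * t - r) * (r+a) - s * (s-e) + t * ((r+a) * (s-e) + (-(2 * b)) * (-(2 * g))) = - p/2" using nz by simp
  have "(- (2 * s * t - r) * (-(2 * b)) - s * (2 * f) + t * ((r+a) * (2 * f) + (-(2 * b)) * (s+e)))  *  (p^2  *  (c - 1 + 2 * s^2)  *  (c-1)  *  Mt) = 0"
    using ha hb he hf p c by algebra
  then show "- (2 * s * t - r) * (-(2 * b)) - s * (2 * f) + t * ((r+a) * (2 * f) + (-(2 * b)) * (s+e)) = 0" using nz by simp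
  have "(- (2 * s * t - r) * (2 * d) - s * (-(2 * g)) + t * ((2 * d) * (s-e) + (r-a) * (-(2 * g))))  *  (p^2  *  (c - 1 + 2 * s^2)  *  (c-1)  *  Mt) = 0"
    using ha hd he hg p c by algebra
  then show "- (2 * s * t - r) * (2 * d) - s * (-(2 * g)) + t * ((2 * d) * (s-e) + (r-a) * (-(2 * g))) = 0" using nz by simp
  have "((2 * r * s * t - r^2 + s^2 - t^2) - (2 * s * t - r) * (r-a) - s * (s+e) + t * ((2 * d) * (2 * f) + (r-a) * (s+e)) - p/2)  *  (p^2  *  (c - 1 + 2 * s^2)  *  (c-1)  *  Mt) = 0"
    using ha hd he hf p c by algebra
  then show "(2 * r * s * t - r^2 + s^2 - t^2) - (2 * s * t - r) * (r-a) - s * (s+e) + t * ((2 * d) * (2 * f) + (r-a) * (s+e)) = p/2" using nz by simp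
qed


lemma left_P:
  fixes P R :: "real^2^2"
  assumes "trace P = 2*r" "det P = 1" "trace R = 2* s" "det R = 1" "trace (P ** R) = 2*t"
  shows "P ** (x0 *\<^sub>R mat 1 + x1 *\<^sub>R P + x2 *\<^sub>R R + x3 *\<^sub>R (P ** R)) =
     (-x1) *\<^sub>R mat 1 + (x0 + 2*r*x1) *\<^sub>R P + (-x3) *\<^sub>R R + (x2 + 2*r*x3) *\<^sub>R (P ** R)"
proof -
  obtain a b c d where P: "P = mat2 a b c d" using mat2_eta by blast
  obtain a' b' c' d' where R: "R = mat2 a' b' c' d'" using mat2_eta by blast
  from assms have h: "a + d = 2*r" "a*d - b*c = 1" by (simp_all add: P R)
  show ?thesis unfolding P R mat2_one using h
    by (simp add: mat2_eq_iff) algebra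
qed

lemma left_Q:
  fixes P R :: "real^2^2"
  assumes "trace P = 2*r" "det P = 1" "trace R = 2* s" "det R = 1" "trace (P ** R) = 2*t"
  shows "R ** (x0 *\<^sub>R mat 1 + x1 *\<^sub>R P + x2 *\<^sub>R R + x3 *\<^sub>R (P ** R)) =
     (x1*(2*t-4*r* s) - x2 - 2*r*x3) *\<^sub>R mat 1 + (2* s*x1 + x3) *\<^sub>R P
     + (x0 + 2*r*x1 + 2* s*x2 + 2*t*x3) *\<^sub>R R + (-x1) *\<^sub>R (P ** R)"
proof -
  obtain a b c d where P: "P = mat2 a b c d" using mat2_eta by blast
  obtain a' b' c' d' where R: "R = mat2 a' b' c' d'" using mat2_eta by blast
  from assms have h: "a + d = 2*r" "a*d - b*c = 1" "a' + d' = 2* s" "a'*d' - b'*c' = 1"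
    "a*a' + b*c' + (c*b' + d*d') = 2*t" by (simp_all add: P R)
  show ?thesis unfolding P R mat2_one using h
    by (simp add: mat2_eq_iff) algebra
qed

lemma lin_mult:
  fixes X Y Z W V :: "real^2^2"
  shows "(a *\<^sub>R X + b *\<^sub>R Y + c *\<^sub>R Z + d *\<^sub>R W) ** V = a *\<^sub>R (X ** V) + b *\<^sub>R (Y ** V) + c *\<^sub>R (Z ** V) + d *\<^sub>R (W ** V)"
proof -
  obtain a1 b1 c1 d1 where X: "X = mat2 a1 b1 c1 d1" using mat2_eta by blast
  obtain a2 b2 c2 d2 where Y: "Y = mat2 a2 b2 c2 d2" using mat2_eta by blast
  obtain a3 b3 c3 d3 where Z: "Z = mat2 a3 b3 c3 d3" using mat2_eta by blast
  obtain a4 b4 c4 d4 where W: "W = mat2 a4 b4 c4 d4" using mat2_eta by blast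
  obtain a5 b5 c5 d5 where V: "V = mat2 a5 b5 c5 d5" using mat2_eta by blast
  show ?thesis unfolding X Y Z W V by (simp add: algebra_simps)
qed

lemma trace_lin:
  fixes X Y Z W :: "real^2^2"
  shows "trace (a *\<^sub>R X + b *\<^sub>R Y + c *\<^sub>R Z + d *\<^sub>R W) = a * trace X + b * trace Y + c * trace Z + d * trace W"
proof -
  obtain a1 b1 c1 d1 where X: "X = mat2 a1 b1 c1 d1" using mat2_eta by blast
  obtain a2 b2 c2 d2 where Y: "Y = mat2 a2 b2 c2 d2" using mat2_eta by blast
  obtain a3 b3 c3 d3 where Z: "Z = mat2 a3 b3 c3 d3" using mat2_eta by blast
  obtain a4 b4 c4 d4 where W: "W = mat2 a4 b4 c4 d4" using mat2_eta by blast
  show ?thesis unfolding X Y Z W by (simp add: algebra_simps)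
qed

lemma refl_conj:
  assumes "u \<noteq> 0"
  shows "mat2 a (-b) (-c) d = (1/u^2) *\<^sub>R (mat2 u 0 0 (-u) ** (mat2 a b c d ** mat2 u 0 0 (-u)))"
  using assms by (simp add: mat2_eq_iff field_simps power2_eq_square)

lemma lin_mult_scale: fixes X Y :: "real^2^2" shows "(k *\<^sub>R X) ** Y = k *\<^sub>R (X ** Y)"
  "X ** (k *\<^sub>R Y) = k *\<^sub>R (X ** Y)"
proof -
  obtain a1 b1 c1 d1 where X: "X = mat2 a1 b1 c1 d1" using mat2_eta by blast
  obtain a2 b2 c2 d2 where Y: "Y = mat2 a2 b2 c2 d2" using mat2_eta by blast
  show "(k *\<^sub>R X) ** (Y::real^2^2) = k *\<^sub>R (X ** Y)" "X ** (k *\<^sub>R Y) = k *\<^sub>R (X ** Y)"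
    unfolding X Y by (simp_all add: algebra_simps)
qed

lemma mult_diff_left: fixes X Y Z :: "real^2^2" shows "(X - Y) ** Z = X ** Z - Y ** Z"
proof -
  obtain a1 b1 c1 d1 where X: "X = mat2 a1 b1 c1 d1" using mat2_eta by blast
  obtain a2 b2 c2 d2 where Y: "Y = mat2 a2 b2 c2 d2" using mat2_eta by blast
  obtain a3 b3 c3 d3 where Z: "Z = mat2 a3 b3 c3 d3" using mat2_eta by blast
  show ?thesis unfolding X Y Z by (simp add: algebra_simps)
qed


definition inA :: "real set \<Rightarrow> real^2^2 \<Rightarrow> real^2^2 \<Rightarrow> real^2^2 \<Rightarrow> bool" where
  "inA F P R X \<longleftrightarrow> (\<exists>x0 x1 x2 x3. x0 \<in> F \<and> x1 \<in> F \<and> x2 \<in> F \<and> x3 \<in> F \<and>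
      X = x0 *\<^sub>R mat 1 + x1 *\<^sub>R P + x2 *\<^sub>R R + x3 *\<^sub>R (P ** R))"

lemma inA_comb:
  assumes SF: "is_subfield F" and "inA F P R X1" "inA F P R X2" "inA F P R X3" "inA F P R X4"
    and "k1 \<in> F" "k2 \<in> F" "k3 \<in> F" "k4 \<in> F"
  shows "inA F P R (k1 *\<^sub>R X1 + k2 *\<^sub>R X2 + k3 *\<^sub>R X3 + k4 *\<^sub>R X4)"
proof -
  obtain a0 a1 a2 a3 where a: "a0 \<in> F" "a1 \<in> F" "a2 \<in> F" "a3 \<in> F"
    "X1 = a0 *\<^sub>R mat 1 + a1 *\<^sub>R P + a2 *\<^sub>R R + a3 *\<^sub>R (P ** R)" using assms(2) unfolding inA_def by blast
  obtain b0 b1 b2 b3 where b: "b0 \<in> F" "b1 \<in> F" "b2 \<in> F" "b3 \<in> F"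
    "X2 = b0 *\<^sub>R mat 1 + b1 *\<^sub>R P + b2 *\<^sub>R R + b3 *\<^sub>R (P ** R)" using assms(3) unfolding inA_def by blast
  obtain c0 c1 c2 c3 where c: "c0 \<in> F" "c1 \<in> F" "c2 \<in> F" "c3 \<in> F"
    "X3 = c0 *\<^sub>R mat 1 + c1 *\<^sub>R P + c2 *\<^sub>R R + c3 *\<^sub>R (P ** R)" using assms(4) unfolding inA_def by blast
  obtain d0 d1 d2 d3 where d: "d0 \<in> F" "d1 \<in> F" "d2 \<in> F" "d3 \<in> F"
    "X4 = d0 *\<^sub>R mat 1 + d1 *\<^sub>R P + d2 *\<^sub>R R + d3 *\<^sub>R (P ** R)" using assms(5) unfolding inA_def by blast
  let ?y0 = "k1 * a0 + k2 * b0 + k3 * c0 + k4 * d0"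
  let ?y1 = "k1 * a1 + k2 * b1 + k3 * c1 + k4 * d1"
  let ?y2 = "k1 * a2 + k2 * b2 + k3 * c2 + k4 * d2"
  let ?y3 = "k1 * a3 + k2 * b3 + k3 * c3 + k4 * d3"
  have eq: "k1 *\<^sub>R X1 + k2 *\<^sub>R X2 + k3 *\<^sub>R X3 + k4 *\<^sub>R X4 =
      ?y0 *\<^sub>R mat 1 + ?y1 *\<^sub>R P + ?y2 *\<^sub>R R + ?y3 *\<^sub>R (P ** R)"
    unfolding a(5) b(5) c(5) d(5) by (simp add: algebra_simps)
  have "?y0 \<in> F" "?y1 \<in> F" "?y2 \<in> F" "?y3 \<in> F"
    using a b c d assms(6-9) by (simp_all add: sf_add[OF SF] sf_mult[OF SF])
  then show ?thesis unfolding inA_def eq by blast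
qed

lemma inA_basis:
  assumes SF: "is_subfield F"
  shows "inA F P R (mat 1)" "inA F P R P" "inA F P R R" "inA F P R (P ** R)"
proof -
  have 0: "0 \<in> F" and 1: "1 \<in> F" using SF by (auto simp: is_subfield_def)
  show "inA F P R (mat 1)" unfolding inA_def using 0 1 by (intro exI[of _ 1] exI[of _ 0]) simp
  show "inA F P R P" unfolding inA_def using 0 1 by (intro exI[of _ 0] exI[of _ 1] exI[of _ 0]) simp
  show "inA F P R R" unfolding inA_def using 0 1
    by (intro exI[of _ 0] exI[of _ 0] exI[of _ 1] exI[of _ 0]) simp
  show "inA F P R (P ** R)" unfolding inA_def using 0 1
    by (intro exI[of _ 0] exI[of _ 0] exI[of _ 0] exI[of _ 1]) simp
qed

lemma inA_scale:
  assumes SF: "is_subfield F" and "inA F P R X" "k \<in> F"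
  shows "inA F P R (k *\<^sub>R X)"
  using inA_comb[OF SF assms(2) assms(2) assms(2) assms(2) assms(3), of 0 0 0] sf0[OF SF] by simp

context
  fixes F r s t and P R :: "real^2^2"
  assumes SF: "is_subfield F" and rF: "r \<in> F" and sF: "s \<in> F" and tF: "t \<in> F"
    and trP: "trace P = 2 * r" and dP: "det P = 1" and trR: "trace R = 2 * s" and dR: "det R = 1"
    and trPR: "trace (P ** R) = 2 * t"
begin

lemma inA_left_P: "inA F P R X \<Longrightarrow> inA F P R (P ** X)"
proof -
  assume "inA F P R X"
  then obtain x0 x1 x2 x3 where x: "x0 \<in> F" "x1 \<in> F" "x2 \<in> F" "x3 \<in> F"
    "X = x0 *\<^sub>R mat 1 + x1 *\<^sub>R P + x2 *\<^sub>R R + x3 *\<^sub>R (P ** R)" unfolding inA_def by blast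
  have "P ** X = (-x1) *\<^sub>R mat 1 + (x0 + 2 * r * x1) *\<^sub>R P + (-x3) *\<^sub>R R + (x2 + 2 * r * x3) *\<^sub>R (P ** R)"
    unfolding x(5) by (rule left_P[OF trP dP trR dR trPR])
  moreover have "-x1 \<in> F" "x0 + 2 * r * x1 \<in> F" "-x3 \<in> F" "x2 + 2 * r * x3 \<in> F"
    using x rF by (simp_all add: sf_closed[OF SF])
  ultimately show ?thesis unfolding inA_def by blast
qed

lemma inA_left_R: "inA F P R X \<Longrightarrow> inA F P R (R ** X)"
proof -
  assume "inA F P R X"
  then obtain x0 x1 x2 x3 where x: "x0 \<in> F" "x1 \<in> F" "x2 \<in> F" "x3 \<in> F"
    "X = x0 *\<^sub>R mat 1 + x1 *\<^sub>R P + x2 *\<^sub>R R + x3 *\<^sub>R (P ** R)" unfolding inA_def by blast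
  have "R ** X = (x1 * (2 * t - 4 * r * s) - x2 - 2 * r * x3) *\<^sub>R mat 1 + (2 * s * x1 + x3) *\<^sub>R P
     + (x0 + 2 * r * x1 + 2 * s * x2 + 2 * t * x3) *\<^sub>R R + (-x1) *\<^sub>R (P ** R)"
    unfolding x(5) by (rule left_Q[OF trP dP trR dR trPR])
  moreover have "x1 * (2 * t - 4 * r * s) - x2 - 2 * r * x3 \<in> F" "2 * s * x1 + x3 \<in> F"
     "x0 + 2 * r * x1 + 2 * s * x2 + 2 * t * x3 \<in> F" "-x1 \<in> F"
    using x rF sF tF by (simp_all add: sf_closed[OF SF])
  ultimately show ?thesis unfolding inA_def by blast
qed

lemma inA_mult: "inA F P R Z \<Longrightarrow> inA F P R X \<Longrightarrow> inA F P R (Z ** X)"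
proof -
  assume Z: "inA F P R Z" and X: "inA F P R X"
  then obtain z0 z1 z2 z3 where z: "z0 \<in> F" "z1 \<in> F" "z2 \<in> F" "z3 \<in> F"
    "Z = z0 *\<^sub>R mat 1 + z1 *\<^sub>R P + z2 *\<^sub>R R + z3 *\<^sub>R (P ** R)" unfolding inA_def by blast
  have "Z ** X = z0 *\<^sub>R X + z1 *\<^sub>R (P ** X) + z2 *\<^sub>R (R ** X) + z3 *\<^sub>R (P ** (R ** X))"
    unfolding z(5) lin_mult by (simp add: matrix_mul_assoc)
  then show ?thesis using inA_comb[OF SF X inA_left_P[OF X] inA_left_R[OF X] inA_left_P[OF inA_left_R[OF X]] z(1-4)]
    by simp
qed

lemma inA_trace: "inA F P R X \<Longrightarrow> trace X \<in> F"
proof -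
  assume "inA F P R X"
  then obtain x0 x1 x2 x3 where x: "x0 \<in> F" "x1 \<in> F" "x2 \<in> F" "x3 \<in> F"
    "X = x0 *\<^sub>R mat 1 + x1 *\<^sub>R P + x2 *\<^sub>R R + x3 *\<^sub>R (P ** R)" unfolding inA_def by blast
  have t1: "trace (mat 1 :: real^2^2) = 2" by (simp add: mat2_one)
  show ?thesis unfolding x(5) trace_lin t1 trP trR trPR
    using x rF sF tF by (simp add: sf_closed[OF SF])
qed

end

theorem theorem2p3:
  fixes r s t M c Mt :: real and \<rho> \<sigma> \<rho>' \<sigma>' :: "real^2^2"
  assumes "r > 1" and "s > 1" and "t > 1" and "M > 0"
    and c_def: "c = 4 * r * s * t - 2 * r^2 - 2 * s^2 - 2 * t^2 + 1"
    and "c > 1"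
    and Mt_def: "Mt = M * (s * sqrt (c^2 - 1) + (c - 1) * sqrt (s^2 - 1)) / (c - 1)"
    and rho_def: "\<rho> = r *\<^sub>R mat 1 + (r * (c+1) / sqrt (c^2 - 1)) *\<^sub>R mI
        - (Mt * (2 * r * s - t + (c + sqrt (c^2 - 1)) * t) / (2 * (c - 1 + 2 * s^2))) *\<^sub>R (mJ + mK)
        + ((2 * r * s - t + (c - sqrt (c^2 - 1)) * t) / (2 * Mt * (c - 1))) *\<^sub>R (mJ - mK)"
    and sigma_def: "\<sigma> = s *\<^sub>R mat 1 - (s * (c+1) / sqrt (c^2 - 1)) *\<^sub>R mI
        + (Mt / 2) *\<^sub>R (mJ + mK)
        - ((c - 1 + 2 * s^2) / (2 * Mt * (c - 1))) *\<^sub>R (mJ - mK)"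
    and rho'_def: "\<rho>' = r *\<^sub>R mat 1 + (r * (c+1) / sqrt (c^2 - 1)) *\<^sub>R mI
        + (Mt * (2 * r * s - t + (c + sqrt (c^2 - 1)) * t) / (2 * (c - 1 + 2 * s^2))) *\<^sub>R (mJ + mK)
        - ((2 * r * s - t + (c - sqrt (c^2 - 1)) * t) / (2 * Mt * (c - 1))) *\<^sub>R (mJ - mK)"
    and sigma'_def: "\<sigma>' = s *\<^sub>R mat 1 - (s * (c+1) / sqrt (c^2 - 1)) *\<^sub>R mI
        - (Mt / 2) *\<^sub>R (mJ + mK)
        + ((c - 1 + 2 * s^2) / (2 * Mt * (c - 1))) *\<^sub>R (mJ - mK)"
  shows "field_gen (trace ` gen_group {\<rho>, \<sigma>, \<rho>', \<sigma>', - mat 1}) = field_gen {r, s, t}"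
proof -
  define p where "p = sqrt (c^2 - 1)"
  have c2: "c^2 - 1 > 0" using \<open>c > 1\<close> by (smt (verit) one_less_power pos2)
  have pp: "p > 0" unfolding p_def using c2 by simp
  have p2: "p^2 = c^2 - 1" unfolding p_def using c2 by simp
  have "s * p + (c - 1) * sqrt (s^2 - 1) > 0"
    using pp \<open>s > 1\<close> \<open>c > 1\<close> by (intro add_pos_nonneg) auto
  then have Mtp: "Mt > 0" unfolding Mt_def p_def[symmetric] using \<open>M > 0\<close> \<open>c > 1\<close> by simp
  define a where "a = r * (c+1) / p"
  define b where "b = Mt * (2 * r * s - t + (c + p) * t) / (2 * (c - 1 + 2 * s^2))"
  define d where "d = (2 * r * s - t + (c - p) * t) / (2 * Mt * (c - 1))"
  define e where "e = s * (c+1) / p"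
  define f where "f = Mt / 2"
  define g where "g = (c - 1 + 2 * s^2) / (2 * Mt * (c - 1))"
  have Mt0: "Mt \<noteq> 0" using Mtp by simp
  note S = scal[OF c_def p2 pp Mt0 \<open>c > 1\<close> \<open>s > 1\<close>, folded a_def b_def d_def e_def f_def g_def]
  have S: "(r+a) * (r-a) - (-(2 * b)) * (2 * d) = 1"
    "(s-e) * (s+e) - (2 * f) * (-(2 * g)) = 1"
    "(r+a) * (s-e) + (-(2 * b)) * (-(2 * g)) + ((2 * d) * (2 * f) + (r-a) * (s+e)) = 2 * t"
    "(2 * r * s * t - r^2 + s^2 - t^2) - (2 * s * t - r) * (r+a) - s * (s-e) + t * ((r+a) * (s-e) + (-(2 * b)) * (-(2 * g))) = - p/2"
    "- (2 * s * t - r) * (-(2 * b)) - s * (2 * f) + t * ((r+a) * (2 * f) + (-(2 * b)) * (s+e)) = 0"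
    "- (2 * s * t - r) * (2 * d) - s * (-(2 * g)) + t * ((2 * d) * (s-e) + (r-a) * (-(2 * g))) = 0"
    "(2 * r * s * t - r^2 + s^2 - t^2) - (2 * s * t - r) * (r-a) - s * (s+e) + t * ((2 * d) * (2 * f) + (r-a) * (s+e)) = p/2"
    by (rule S)+
  have rho: "\<rho> = mat2 (r+a) (-(2 * b)) (2 * d) (r-a)"
    unfolding rho_def a_def b_def d_def p_def mI_def mJ_def mK_def mat2_one by (simp add: mat2_eq_iff)
  have sig: "\<sigma> = mat2 (s-e) (2 * f) (-(2 * g)) (s+e)"
    unfolding sigma_def e_def f_def g_def p_def mI_def mJ_def mK_def mat2_one by (simp add: mat2_eq_iff)
  have rho': "\<rho>' = mat2 (r+a) (- (-(2 * b))) (- (2 * d)) (r-a)"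
    unfolding rho'_def a_def b_def d_def p_def mI_def mJ_def mK_def mat2_one by (simp add: mat2_eq_iff)
  have sig': "\<sigma>' = mat2 (s-e) (- (2 * f)) (- (-(2 * g))) (s+e)"
    unfolding sigma'_def e_def f_def g_def p_def mI_def mJ_def mK_def mat2_one by (simp add: mat2_eq_iff)
  have trP: "trace \<rho> = 2 * r" unfolding rho by simp
  have trR: "trace \<sigma> = 2 * s" unfolding sig by simp
  have dP: "det \<rho> = 1" unfolding rho using S(1) by simp
  have dR: "det \<sigma> = 1" unfolding sig using S(2) by simp
  have trPR: "trace (\<rho> ** \<sigma>) = 2 * t" unfolding rho sig using S(3) by simp
  have dP': "det \<rho>' = 1" unfolding rho' using S(1) by simp
  have dR': "det \<sigma>' = 1" unfolding sig' using S(2) by simp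
  have dm: "det (- mat 1 :: real^2^2) = 1" by (simp add: mat2_one)
  define Y where "Y = (2 * r * s * t - r^2 + s^2 - t^2) *\<^sub>R mat 1 + (- (2 * s * t - r)) *\<^sub>R \<rho>
     + (- s) *\<^sub>R \<sigma> + t *\<^sub>R (\<rho> ** \<sigma>)"
  have Y: "Y = mat2 (-p/2) 0 0 (- (-p/2))"
    unfolding Y_def mat2_one rho sig using S(4-7) by (simp add: mat2_eq_iff algebra_simps)
  have u: "-p/2 \<noteq> 0" using pp by simp
  have kdef: "1 / (-p/2)^2 = 4 / (c^2 - 1)" using p2 by (simp add: power2_eq_square field_simps)
  have rho'Y: "\<rho>' = (4 / (c^2 - 1)) *\<^sub>R (Y ** (\<rho> ** Y))"
    unfolding rho' Y rho kdef[symmetric] by (rule refl_conj[OF u])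
  have sig'Y: "\<sigma>' = (4 / (c^2 - 1)) *\<^sub>R (Y ** (\<sigma> ** Y))"
    unfolding sig' Y sig kdef[symmetric] by (rule refl_conj[OF u])
  define F where "F = field_gen {r, s, t}"
  have SF: "is_subfield F" unfolding F_def by (rule sf_field_gen)
  have rF: "r \<in> F" and sF: "s \<in> F" and tF: "t \<in> F"
    unfolding F_def using field_gen_sub[of "{r, s, t}"] by auto
  have cF: "c \<in> F" unfolding c_def using rF sF tF by (simp add: sf_closed[OF SF])
  note AB = inA_basis[OF SF, of \<rho> \<sigma>]
  note mult = inA_mult[OF SF rF sF tF trP dP trR dR trPR]
  note trA = inA_trace[OF SF rF sF tF trP dP trR dR trPR]
  have YA: "inA F \<rho> \<sigma> Y" unfolding Y_def
    by (rule inA_comb[OF SF AB]) (use rF sF tF in \<open>simp_all add: sf_closed[OF SF]\<close>)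
  have kF: "4 / (c^2 - 1) \<in> F" using cF by (simp add: sf_closed[OF SF])
  have rho'A: "inA F \<rho> \<sigma> \<rho>'" unfolding rho'Y
    by (rule inA_scale[OF SF mult[OF YA mult[OF AB(2) YA]] kF])
  have sig'A: "inA F \<rho> \<sigma> \<sigma>'" unfolding sig'Y
    by (rule inA_scale[OF SF mult[OF YA mult[OF AB(3) YA]] kF])
  have mA: "inA F \<rho> \<sigma> (- mat 1)"
    using inA_scale[OF SF AB(1), of "-1"] sf_closed[OF SF] by simp
  let ?S = "{\<rho>, \<sigma>, \<rho>', \<sigma>', - mat 1}"
  have gens: "\<And>g. g \<in> ?S \<Longrightarrow> inA F \<rho> \<sigma> g \<and> det g = 1"
    using AB rho'A sig'A mA dP dR dP' dR' dm by auto
  have grp: "h \<in> gen_group ?S \<Longrightarrow> inA F \<rho> \<sigma> h" for h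
  proof (induction h rule: gen_group.induct)
    case one
    then show ?case by (rule AB(1))
  next
    case (mul g h)
    then show ?case using gens mult by blast
  next
    case (mul_inv g h)
    have gA: "inA F \<rho> \<sigma> g" and dg: "det g = 1" using gens mul_inv.hyps(1) by auto
    have eq: "matrix_inv g ** h = trace g *\<^sub>R h - g ** h"
      unfolding matrix_inv_det1[OF dg] mult_diff_left lin_mult_scale by simp
    have "inA F \<rho> \<sigma> (trace g *\<^sub>R h + (-1) *\<^sub>R (g ** h) + 0 *\<^sub>R h + 0 *\<^sub>R h)"
      by (rule inA_comb[OF SF mul_inv.IH mult[OF gA mul_inv.IH] mul_inv.IH mul_inv.IH trA[OF gA]])
        (simp_all add: sf_closed[OF SF])
    then show ?case unfolding eq by simp
  qed
  have sub1: "field_gen (trace ` gen_group ?S) \<subseteq> F"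
    by (rule field_gen_least[OF SF]) (use grp trA in blast)
  define K where "K = field_gen (trace ` gen_group ?S)"
  have SK: "is_subfield K" unfolding K_def by (rule sf_field_gen)
  have inG: "\<rho> \<in> gen_group ?S" "\<rho> ** \<sigma> \<in> gen_group ?S" "\<sigma> \<in> gen_group ?S"
    using gen_group.mul[of \<rho> ?S "mat 1"] gen_group.mul[of \<sigma> ?S "mat 1"]
      gen_group.mul[of \<rho> ?S "\<sigma> ** mat 1"] gen_group.one[of ?S] by auto
  have trK: "trace \<rho> \<in> K" "trace \<sigma> \<in> K" "trace (\<rho> ** \<sigma>) \<in> K"
    unfolding K_def using inG field_gen_sub by blast+
  have "r = trace \<rho> / 2" "s = trace \<sigma> / 2" "t = trace (\<rho> ** \<sigma>) / 2" using trP trR trPR by simp_all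
  then have "{r, s, t} \<subseteq> K" using trK sf_divide[OF SK _ sf_numeral[OF SK, of "num.Bit0 num.One"]]
    by (metis empty_subsetI insert_subset numeral_2_eq_2)
  then have sub2: "F \<subseteq> K" unfolding F_def by (rule field_gen_least[OF SK])
  show ?thesis using sub1 sub2 unfolding K_def F_def by blast
qed

end
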